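(* If $R\subseteq\mathbb{N}$ has large gaps, then $R$ is rich.
   Context: A set $R\subseteq\mathbb{N}$ has large gaps if $R$ is infinite, $0\notin R$, and for every $k\in\mathbb{N}$ with $k>0$ there exists $q\in R$ such that $[\lfloor q/k\rfloor,\,k\cdot q]\cap R=\{q\}$ (intervals of natural numbers). A set $R\subseteq\mathbb{N}$ is rich if for all $s,u,v\in\mathbb{N}$, all $\bar a_0\in\{0,1\}^s\setminus\{\bar0\}$, $\bar a_1,\dots,\bar a_u\in\mathbb{N}^s$ and all $c_1,\dots,c_u\in\mathbb{N}$ with $(\bar a_0,0)\ne(\bar a_i,c_i)$ for all $i\in\{1,\dots,u\}$, there exist $\bar x,\bar y\in(v+\mathbb{N})^s$ (vectors with all entries $\ge v$) such that $\bar a_0^\top\bar x\in R\iff\bar a_0^\top\bar y\notin R$, and $\bar a_i^\top\bar x-c_i\in R\iff\bar a_i^\top\bar y-c_i\in R$ for all $i\in\{1,\dots,u\}$. *)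

theory Defs
  imports Main
begin

definition dotp :: "nat list \<Rightarrow> nat list \<Rightarrow> nat" where
  "dotp a x = sum_list (map2 (*) a x)"

definition large_gaps :: "nat set \<Rightarrow> bool" where
  "large_gaps R \<longleftrightarrow> infinite R \<and> 0 \<notin> R \<and>
     (\<forall>k::nat. k > 0 \<longrightarrow> (\<exists>q\<in>R. {q div k .. k * q} \<inter> R = {q}))"

definition rich :: "nat set \<Rightarrow> bool" where
  "rich R \<longleftrightarrow>
    (\<forall>s u v :: nat. \<forall>a0 :: nat list. \<forall>ac :: (nat list \<times> nat) list.
       length a0 = s \<longrightarrow> set a0 \<subseteq> {0, 1} \<longrightarrow> a0 \<noteq> replicate s 0 \<longrightarrow>
       length ac = u \<longrightarrow> (\<forall>(a, c) \<in> set ac. length a = s) \<longrightarrow>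
       (\<forall>(a, c) \<in> set ac. (a0, 0) \<noteq> (a, c)) \<longrightarrow>
       (\<exists>x y :: nat list. length x = s \<and> length y = s \<and>
          (\<forall>i\<in>set x. v \<le> i) \<and> (\<forall>i\<in>set y. v \<le> i) \<and>
          (dotp a0 x \<in> R \<longleftrightarrow> dotp a0 y \<notin> R) \<and>
          (\<forall>(a, c) \<in> set ac.
             (int (dotp a x) - int c \<in> int ` R \<longleftrightarrow> int (dotp a y) - int c \<in> int ` R))))"

end

theory Submission
  imports Defs
begin

lemma dotp_Cons: "dotp (a # as) (z # zs) = a * z + dotp as zs"
  by (simp add: dotp_def)

lemma dotp_Nil: "dotp [] z = 0"
  by (simp add: dotp_def)

lemma dotp_update:
  "length a = length z \<Longrightarrow> j < length z \<Longrightarrow>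
   dotp a (z[j := t]) = dotp (a[j := 0]) z + a ! j * t"
proof (induction a arbitrary: z j)
  case Nil
  then show ?case by simp
next
  case (Cons a1 as)
  then obtain z1 zs where z: "z = z1 # zs" by (cases z) auto
  show ?case
  proof (cases j)
    case 0
    then show ?thesis using z by (simp add: dotp_Cons)
  next
    case (Suc j')
    then show ?thesis using z Cons by (simp add: dotp_Cons)
  qed
qed

lemma generic:
  "finite P \<Longrightarrow> (\<forall>(a,b)\<in>P. length a = n \<and> length b = n \<and> a \<noteq> b) \<Longrightarrow>
   \<exists>z. length z = n \<and> (\<forall>i\<in>set z. v \<le> i) \<and>
     (\<forall>(a,b)\<in>P. dotp a z + K < dotp b z \<or> dotp b z + K < dotp a z)"
proof (induction n arbitrary: P)
  case 0
  then have "P = {}" by auto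
  then show ?case by auto
next
  case (Suc n)
  define P' where "P' = (\<lambda>(a,b). (tl a, tl b)) ` {(a,b)\<in>P. hd a = hd b}"
  have "finite P'" unfolding P'_def using Suc.prems(1) by (intro finite_imageI) (rule finite_subset[of _ P], auto)
  moreover have "\<forall>(a,b)\<in>P'. length a = n \<and> length b = n \<and> a \<noteq> b"
  proof -
    have "length (tl a) = n \<and> length (tl b) = n \<and> tl a \<noteq> tl b" if ab: "(a,b) \<in> P" "hd a = hd b" for a b
    proof -
      have l: "length a = Suc n" "length b = Suc n" "a \<noteq> b" using Suc.prems(2) ab by auto
      then have "a = hd a # tl a" "b = hd b # tl b" by (metis list.collapse list.size(3) nat.simps(3))+
      then show ?thesis using l ab by (metis length_tl diff_Suc_1)
    qed
    then show ?thesis unfolding P'_def by auto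
  qed
  ultimately obtain zs where zs: "length zs = n" "\<forall>i\<in>set zs. v \<le> i"
    "\<forall>(a,b)\<in>P'. dotp a zs + K < dotp b zs \<or> dotp b zs + K < dotp a zs"
    using Suc.IH by blast
  define S where "S = (\<Sum>(a,b)\<in>P. dotp (tl a) zs + dotp (tl b) zs)"
  define z1 where "z1 = v + K + 1 + S"
  have Sle: "dotp (tl a) zs + dotp (tl b) zs \<le> S" if "(a,b) \<in> P" for a b
  proof -
    have "(\<lambda>(a,b). dotp (tl a) zs + dotp (tl b) zs) (a,b) \<le> S"
      unfolding S_def by (rule member_le_sum) (use that Suc.prems(1) in auto)
    then show ?thesis by simp
  qed
  show ?case
  proof (intro exI conjI)
    show "length (z1 # zs) = Suc n" using zs by simp
    show "\<forall>i\<in>set (z1 # zs). v \<le> i" using zs unfolding z1_def by auto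
    have "dotp a (z1 # zs) + K < dotp b (z1 # zs) \<or> dotp b (z1 # zs) + K < dotp a (z1 # zs)" if ab: "(a,b) \<in> P" for a b
    proof -
      have l: "length a = Suc n" "length b = Suc n" using ab Suc.prems(2) by auto
      then obtain a1 as b1 bs where A: "a = a1 # as" "b = b1 # bs"
        by (metis length_Suc_conv)
      have S1: "dotp as zs + dotp bs zs \<le> S" using Sle[OF ab] A by simp
      have ea: "dotp a (z1 # zs) = a1 * z1 + dotp as zs" "dotp b (z1 # zs) = b1 * z1 + dotp bs zs"
        using A by (simp_all add: dotp_Cons)
      show "dotp a (z1 # zs) + K < dotp b (z1 # zs) \<or> dotp b (z1 # zs) + K < dotp a (z1 # zs)"
      proof (cases "a1 = b1")
        case True
        then have "(as, bs) \<in> P'" unfolding P'_def using ab A by force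
        then show ?thesis using zs(3) ea True by auto
      next
        case False
        show ?thesis
        proof (cases "a1 < b1")
          case True
          then have "(a1 + 1) * z1 \<le> b1 * z1" by (intro mult_le_mono1) simp
          then show ?thesis using ea S1 unfolding z1_def by (simp add: algebra_simps)
        next
          case F: False
          then have "(b1 + 1) * z1 \<le> a1 * z1" using False by (intro mult_le_mono1) simp
          then show ?thesis using ea S1 unfolding z1_def by (simp add: algebra_simps)
        qed
      qed
    qed
    then show "\<forall>(a,b)\<in>P. dotp a (z1 # zs) + K < dotp b (z1 # zs) \<or> dotp b (z1 # zs) + K < dotp a (z1 # zs)"
      by auto
  qed
qed

lemma memb: "(int n - int c \<in> int ` R) \<longleftrightarrow> (c \<le> n \<and> n - c \<in> R)"
proof
  assume "int n - int c \<in> int ` R"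
  then obtain r where "r \<in> R" "int n - int c = int r" by auto
  then show "c \<le> n \<and> n - c \<in> R" by (metis add_diff_cancel_right' diff_add_cancel le_add2 nat_int of_nat_add)
next
  assume "c \<le> n \<and> n - c \<in> R"
  then show "int n - int c \<in> int ` R" by (metis image_eqI of_nat_diff)
qed

theorem proposition6p10:
  fixes R :: "nat set"
  assumes "large_gaps R"
  shows "rich R"
  unfolding rich_def
proof (intro allI impI)
  fix s u v :: nat and a0 :: "nat list" and ac :: "(nat list \<times> nat) list"
  assume la0: "length a0 = s" and a01: "set a0 \<subseteq> {0, 1}" and a0nz: "a0 \<noteq> replicate s 0"
    and lac: "length ac = u" and lens: "\<forall>(a, c) \<in> set ac. length a = s"
    and neq: "\<forall>(a, c) \<in> set ac. (a0, 0) \<noteq> (a, c)"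
  have infR: "infinite R" and R0: "0 \<notin> R"
    and gap: "\<And>k. k > 0 \<Longrightarrow> \<exists>q\<in>R. {q div k .. k * q} \<inter> R = {q}"
    using assms unfolding large_gaps_def by auto
  obtain j where j: "j < s" "a0 ! j = 1"
  proof -
    have "\<exists>j<s. a0 ! j \<noteq> 0"
    proof (rule ccontr)
      assume "\<not> (\<exists>j<s. a0 ! j \<noteq> 0)"
      then have "a0 = replicate s 0" using la0 by (intro nth_equalityI) auto
      then show False using a0nz by simp
    qed
    then obtain j where "j < s" "a0 ! j \<noteq> 0" by blast
    moreover have "a0 ! j \<in> {0,1}" using a01 `j < s` la0 nth_mem by blast
    ultimately show ?thesis using that by auto
  qed
  define C where "C = sum_list (map snd ac)"
  define P where "P = (\<lambda>(a,c). (a[j:=0], a0[j:=0])) ` {(a,c) \<in> set ac. a ! j = 1 \<and> a \<noteq> a0}"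
  have finP: "finite P" unfolding P_def
    by (intro finite_imageI) (rule finite_subset[of _ "set ac"], auto)
  have Pok: "\<forall>(a,b)\<in>P. length a = s \<and> length b = s \<and> a \<noteq> b"
  proof -
    have "length (a[j:=0]) = s \<and> length (a0[j:=0]) = s \<and> a[j:=0] \<noteq> a0[j:=0]"
      if "(a,c) \<in> set ac" "a ! j = 1" "a \<noteq> a0" for a c
    proof -
      have la: "length a = s" using that lens by auto
      have "a[j:=0] \<noteq> a0[j:=0]"
      proof
        assume "a[j:=0] = a0[j:=0]"
        then have "(a[j:=0])[j := a!j] = (a0[j:=0])[j := a0!j]" using that j by simp
        then have "a = a0" by simp
        then show False using that by simp
      qed
      then show ?thesis using la la0 by simp
    qed
    then show ?thesis unfolding P_def by auto
  qed
  obtain z where z: "length z = s" "\<forall>i\<in>set z. v \<le> i"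
    "\<forall>(a,b)\<in>P. dotp a z + (C+1) < dotp b z \<or> dotp b z + (C+1) < dotp a z"
    using generic[OF finP Pok, of v "C+1"] by blast
  define A0 where "A0 = dotp (a0[j:=0]) z"
  define k where "k = 2 + sum_list (map (\<lambda>(a,c). dotp (a[j:=0]) z + a!j) ac) + A0 + 1"
  obtain r1 where r1: "r1 \<in> R" using infR by (metis finite.emptyI ex_in_conv)
  obtain r2 where r2: "r2 \<in> R" "r2 \<noteq> r1"
  proof -
    have "infinite (R - {r1})" using infR by simp
    then obtain r where "r \<in> R - {r1}" by (metis finite.emptyI ex_in_conv)
    then show ?thesis using that by auto
  qed
  define N where "N = 2*A0 + 2*C + v + 3"
  define kk where "kk = k + N + r1 + r2"
  have kk2: "kk \<ge> 2" "kk \<ge> k" unfolding kk_def k_def by auto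
  obtain q where q: "q \<in> R" "{q div kk .. kk * q} \<inter> R = {q}"
    using gap[of kk] kk2 by auto
  have q1: "q \<ge> 1" using q R0 by (cases q) auto
  have qN: "q \<ge> N"
  proof (rule ccontr)
    assume "\<not> q \<ge> N"
    then have "q div kk = 0" unfolding kk_def by simp
    moreover have "r1 \<le> kk * q" "r2 \<le> kk * q"
      using q1 unfolding kk_def by (simp_all add: trans_le_add2 le_trans[OF _ mult_le_mono2[of 1 q]])
    ultimately have "r1 \<in> {q div kk .. kk * q} \<inter> R" "r2 \<in> {q div kk .. kk * q} \<inter> R" using r1 r2 by auto
    then have "r1 = q" "r2 = q" using q(2) by blast+
    then show False using r2 by simp
  qed
  have notR: "n \<notin> R" if "q div kk \<le> n" "n \<le> kk * q" "n \<noteq> q" for n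
  proof
    assume "n \<in> R"
    then have "n \<in> {q div kk .. kk * q} \<inter> R" using that by simp
    then show False using q(2) that by blast
  qed
  have qdiv: "q div kk \<le> q div 2" using kk2 by (simp add: div_le_mono2)
  have qh: "2 * (q div 2) \<le> q" by presburger
  define X where "X = q - A0"
  have XA: "X + A0 = q" "X \<ge> v + 1" using qN unfolding X_def N_def by auto
  define x where "x = z[j := X]"
  define y where "y = z[j := X - 1]"
  have H: "\<not> (int n - int c \<in> int ` R)"
    if "c \<le> C" "q - A0 - 1 \<le> n" "n \<le> kk*q" "n \<noteq> q + c" for n c
  proof
    assume "int n - int c \<in> int ` R"
    then have m: "c \<le> n" "n - c \<in> R" by (simp_all add: memb)
    have "q div kk \<le> n - c" using qdiv qh that qN unfolding N_def by linarith
    moreover have "n - c \<le> kk * q" using that by linarith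
    moreover have "n - c \<noteq> q" using that m by linarith
    ultimately show False using notR m by blast
  qed
  show "\<exists>x y. length x = s \<and> length y = s \<and> (\<forall>i\<in>set x. v \<le> i) \<and> (\<forall>i\<in>set y. v \<le> i) \<and>
          (dotp a0 x \<in> R \<longleftrightarrow> dotp a0 y \<notin> R) \<and>
          (\<forall>(a, c) \<in> set ac.
             (int (dotp a x) - int c \<in> int ` R \<longleftrightarrow> int (dotp a y) - int c \<in> int ` R))"
  proof (intro exI conjI)
    show "length x = s" "length y = s" unfolding x_def y_def using z by auto
    show "\<forall>i\<in>set x. v \<le> i" unfolding x_def using z XA set_update_subset_insert by fastforce
    show "\<forall>i\<in>set y. v \<le> i" unfolding y_def using z XA set_update_subset_insert by fastforce
    have dx: "dotp a x = dotp (a[j:=0]) z + a!j * X" if "length a = s" for a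
      unfolding x_def using dotp_update[of a z j X] that z j by simp
    have dy: "dotp a y = dotp (a[j:=0]) z + a!j * (X - 1)" if "length a = s" for a
      unfolding y_def using dotp_update[of a z j "X - 1"] that z j by simp
    have "dotp a0 x = q" using dx[OF la0] j XA unfolding A0_def by simp
    moreover have "dotp a0 y = q - 1" using dy[OF la0] j XA unfolding A0_def by simp
    moreover have "q - 1 \<notin> R"
    proof (rule notR)
      show "q div kk \<le> q - 1" using qdiv qh q1 by linarith
      have "q \<le> kk * q" using kk2 by simp
      then show "q - 1 \<le> kk * q" by linarith
      show "q - 1 \<noteq> q" using q1 by simp
    qed
    ultimately show "dotp a0 x \<in> R \<longleftrightarrow> dotp a0 y \<notin> R" using q by simp
    have "(int (dotp a x) - int c \<in> int ` R \<longleftrightarrow> int (dotp a y) - int c \<in> int ` R)"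
      if ac_in: "(a,c) \<in> set ac" for a c
    proof -
      have la: "length a = s" using ac_in lens by auto
      define t where "t = a ! j"
      define A where "A = dotp (a[j:=0]) z"
      have nx: "dotp a x = A + t * X" using dx[OF la] unfolding A_def t_def .
      have ny: "dotp a y = A + t * (X - 1)" using dy[OF la] unfolding A_def t_def .
      have "(\<lambda>(a,c). dotp (a[j:=0]) z + a!j) (a,c) \<in> set (map (\<lambda>(a,c). dotp (a[j:=0]) z + a!j) ac)"
        using ac_in by force
      then have "A + t \<le> sum_list (map (\<lambda>(a,c). dotp (a[j:=0]) z + a!j) ac)"
        unfolding A_def t_def using member_le_sum_list by fastforce
      then have Atk: "A + t \<le> kk" using kk2 unfolding k_def by linarith
      have "c \<in> set (map snd ac)" using ac_in by force
      then have cC: "c \<le> C" unfolding C_def using member_le_sum_list by blast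
      show ?thesis
      proof (cases "t = 0")
        case True
        then show ?thesis using nx ny by simp
      next
        case False
        have tX: "t * X \<le> t * q" "t * (X - 1) \<le> t * X" using XA by simp_all
        have up: "A + t * q \<le> kk * q"
        proof -
          have "A + t * q \<le> (A + t) * q" using q1 by (simp add: algebra_simps)
          also have "\<dots> \<le> kk * q" using Atk by simp
          finally show ?thesis .
        qed
        have lo: "X - 1 \<le> t * (X - 1)" using False by simp
        have neqs: "A + t * X \<noteq> q + c \<and> A + t * (X - 1) \<noteq> q + c"
        proof (cases "t \<ge> 2")
          case True
          have "2 * (X - 1) \<le> t * (X - 1)" using True by (intro mult_le_mono1)
          then show ?thesis using tX XA qN cC unfolding N_def by linarith
        next
          case False
          then have t1: "t = 1" using `t \<noteq> 0` by simp
          show ?thesis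
          proof (cases "a = a0")
            case True
            then have "c \<noteq> 0" using neq ac_in by auto
            moreover have "A = A0" using True unfolding A_def A0_def by simp
            ultimately show ?thesis using t1 XA by simp
          next
            case False
            then have "(a[j:=0], a0[j:=0]) \<in> P" unfolding P_def using ac_in t1 t_def by force
            then have "A + (C+1) < A0 \<or> A0 + (C+1) < A" using z(3) unfolding A_def A0_def by auto
            then show ?thesis using t1 XA cC by auto
          qed
        qed
        have "\<not> (int (dotp a x) - int c \<in> int ` R)"
          using H[of c "dotp a x"] cC nx tX lo up XA neqs by linarith
        moreover have "\<not> (int (dotp a y) - int c \<in> int ` R)"
          using H[of c "dotp a y"] cC ny tX lo up XA neqs by linarith
        ultimately show ?thesis by simp
      qed
    qed
    then show "\<forall>(a, c) \<in> set ac.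
             (int (dotp a x) - int c \<in> int ` R \<longleftrightarrow> int (dotp a y) - int c \<in> int ` R)" by auto
  qed
qed

end
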